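(* Consider the Ising model $H(\sigma)=-J\sum_{\langle x,y\rangle}\sigma(x)\sigma(y)$ on the Cayley tree $\tau^k$ with $\theta=\tanh(J\beta)$ and $\alpha=\frac{1-\theta}{1+\theta}$, and let $A\subset N_k=\{1,\dots,k+1\}$ with $|A|=k$. Suppose $\alpha>1$. Then: 1) If $k\le 3$, every $H_A$-weakly periodic Gibbs measure on the invariant set $I_3$ is translation-invariant. 2) If $k=4$, there exists a critical value $\alpha_{cr}$ ($\approx 6.3716$) such that: for $\alpha<\alpha_{cr}$ there is exactly one $H_A$-weakly periodic Gibbs measure on $I_3$; for $\alpha=\alpha_{cr}$ there are exactly three $H_A$-weakly periodic Gibbs measures on $I_3$; for $\alpha>\alpha_{cr}$ there are exactly five $H_A$-weakly periodic Gibbs measures on $I_3$.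
   Context: $\tau^k=(V,L)$ is the Cayley tree of order $k\ge1$ (every vertex has $k+1$ neighbours). Its vertices are identified with the group $G_k$, the free product of $k+1$ cyclic groups of order two with generators $a_1,\dots,a_{k+1}$ ($a_i^2=e$), so that $x,y$ are neighbours iff $x=ya_i$ for some $i$; the root is $e$. For $x\in G_k$, $S(x)$ denotes the set of direct successors of $x$ (neighbours farther from $e$), and $x_\downarrow$ denotes the unique neighbour of $x$ not in $S(x)$. Spins take values $\sigma(x)\in\{-1,1\}$, $J\in\mathbb R$, $\beta=1/T>0$. Gibbs measures are constructed from boundary fields $h=\{h_x\in\mathbb R: x\in G_k\}$ via $\mu_n(\sigma_n)=Z_n^{-1}\exp\{-\beta H(\sigma_n)+\sum_{x\in W_n}h_x\sigma(x)\}$ on balls $V_n$ (with $W_n$ the sphere of radius $n$); these are consistent (and define a limiting Gibbs measure) iff $h_x=\sum_{y\in S(x)}f(h_y,\theta)$ for all $x$, where $f(h,\theta)=\operatorname{arcth}(\theta\tanh h)$. Distinct such $h$ give distinct measures. For $\emptyset\ne A\subseteq N_k$, $H_A=\{x\in G_k:\sum_{i\in A}w_x(a_i)\text{ is even}\}$, where $w_x(a_i)$ is the number of letters $a_i$ in the (reduced) word $x$; it is a normal subgroup of index 2. A collection $h$ is $H_A$-weakly periodic if $h_x$ depends only on whether $x\in H_A$ and whether $x_\downarrow\in H_A$: $h_x=h_1$ if $x\in H_A,x_\downarrow\in H_A$; $h_2$ if $x\in H_A,x_\downarrow\notin H_A$; $h_3$ if $x\notin H_A,x_\downarrow\in H_A$;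 $h_4$ if $x\notin H_A,x_\downarrow\notin H_A$. A Gibbs measure is $H_A$-weakly periodic if it corresponds to such an $h$. For $|A|=k$ the consistency condition becomes the system $h_1=kf(h_3,\theta)$, $h_2=(k-1)f(h_3,\theta)+f(h_1,\theta)$, $h_3=(k-1)f(h_2,\theta)+f(h_4,\theta)$, $h_4=kf(h_2,\theta)$, and $H_A$-weakly periodic Gibbs measures correspond bijectively to its solutions $(h_1,h_2,h_3,h_4)\in\mathbb R^4$. The invariant set is $I_3=\{h\in\mathbb R^4: h_1=-h_4,\ h_2=-h_3\}$; "measures on $I_3$" means those whose solution lies in $I_3$. A measure is translation-invariant if $h_x$ is constant in $x$ (i.e. $h_1=h_2=h_3=h_4$). *)

theory Defs
  imports Complex_Main
begin

definition fI :: "real \<Rightarrow> real \<Rightarrow> real" where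
  "fI h \<theta> = artanh (\<theta> * tanh h)"

definition theta :: "real \<Rightarrow> real \<Rightarrow> real" where
  "theta J \<beta> = tanh (J * \<beta>)"

definition alpha :: "real \<Rightarrow> real \<Rightarrow> real" where
  "alpha J \<beta> = (1 - theta J \<beta>) / (1 + theta J \<beta>)"

text \<open>Consistency system for H_A-weakly periodic boundary fields, |A| = k.
  H_A-weakly periodic Gibbs measures correspond bijectively to its solutions.\<close>
definition wp_system :: "nat \<Rightarrow> real \<Rightarrow> real \<times> real \<times> real \<times> real \<Rightarrow> bool" where
  "wp_system k \<theta> h = (case h of (h1, h2, h3, h4) \<Rightarrow>
      h1 = real k * fI h3 \<theta> \<and>
      h2 = (real k - 1) * fI h3 \<theta> + fI h1 \<theta> \<and>
      h3 = (real k - 1) * fI h2 \<theta> + fI h4 \<theta> \<and>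
      h4 = real k * fI h2 \<theta>)"

definition I3 :: "(real \<times> real \<times> real \<times> real) set" where
  "I3 = {(h1, h2, h3, h4). h1 = - h4 \<and> h2 = - h3}"

definition WP_Gibbs_I3 :: "nat \<Rightarrow> real \<Rightarrow> real \<Rightarrow> (real \<times> real \<times> real \<times> real) set" where
  "WP_Gibbs_I3 k J \<beta> = {h \<in> I3. wp_system k (theta J \<beta>) h}"

definition translation_invariant :: "real \<times> real \<times> real \<times> real \<Rightarrow> bool" where
  "translation_invariant h = (case h of (h1, h2, h3, h4) \<Rightarrow> h1 = h2 \<and> h2 = h3 \<and> h3 = h4)"

end

theory Submission
  imports Defs "HOL-Computational_Algebra.Polynomial"
begin


lemma tanh_exp2: "tanh (x::real) = (exp (2*x) - 1) / (exp (2*x) + 1)"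
proof -
  have e: "exp (2*x) = exp x * exp x" by (metis exp_add mult_2)
  have m: "exp (-x) = 1 / exp x" by (simp add: exp_minus field_simps)
  have p: "exp x > 0" by simp
  have g: "\<And>y::real. y > 0 \<Longrightarrow> (y - 1/y)/(y + 1/y) = (y*y-1)/(y*y+1)"
  proof -
    fix y :: real assume y: "y > 0"
    have a: "y - 1/y = (y*y-1)/y" "y + 1/y = (y*y+1)/y" using y by (simp_all add: field_simps)
    have "y \<noteq> 0" using y by simp
    then have "((y*y-1)/y)/((y*y+1)/y) = (y*y-1)/(y*y+1)" by simp
    then show "(y - 1/y)/(y + 1/y) = (y*y-1)/(y*y+1)" unfolding a .
  qed
  show ?thesis unfolding tanh_altdef e m using g[OF p] by simp
qed

lemma exp2_artanh: "\<bar>v::real\<bar> < 1 \<Longrightarrow> exp (2 * artanh v) = (1+v)/(1-v)"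
  unfolding artanh_def by simp

lemma exp2_fI:
  assumes "\<bar>\<theta>\<bar> < 1"
  shows "exp (2 * fI h \<theta>) = (exp (2*h) + (1-\<theta>)/(1+\<theta>)) / ((1-\<theta>)/(1+\<theta>) * exp (2*h) + 1)"
proof -
  have t: "\<bar>tanh h\<bar> < 1" using tanh_real_bounds[of h] by auto
  have v: "\<bar>\<theta> * tanh h\<bar> < 1"
    using t assms using abs_mult_less[OF assms t] by (simp add: abs_mult)
  define z where "z = exp (2*h)"
  have z: "z > 0" unfolding z_def by simp
  have th: "1 + \<theta> > 0" "1 - \<theta> > 0" using assms by auto
  have "exp (2 * fI h \<theta>) = (1 + \<theta> * tanh h) / (1 - \<theta> * tanh h)"
    unfolding fI_def using exp2_artanh[OF v] .
  also have "\<dots> = (1 + \<theta> * ((z-1)/(z+1))) / (1 - \<theta> * ((z-1)/(z+1)))"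
    unfolding tanh_exp2 z_def ..
  also have "\<dots> = (z + (1-\<theta>)/(1+\<theta>)) / ((1-\<theta>)/(1+\<theta>) * z + 1)"
  proof -
    have d1: "(1-\<theta>)*z + (1+\<theta>) > 0" using z th by (simp add: add_pos_pos)
    have n1: "1 + \<theta> * ((z-1)/(z+1)) = ((1+\<theta>)*z + (1-\<theta>))/(z+1)"
      using z by (simp add: field_simps; simp add: algebra_simps)
    have n2: "1 - \<theta> * ((z-1)/(z+1)) = ((1-\<theta>)*z + (1+\<theta>))/(z+1)"
      using z by (simp add: field_simps; simp add: algebra_simps)
    have n3: "z + (1-\<theta>)/(1+\<theta>) = ((1+\<theta>)*z + (1-\<theta>))/(1+\<theta>)"
      using th by (simp add: field_simps)
    have n4: "(1-\<theta>)/(1+\<theta>) * z + 1 = ((1-\<theta>)*z + (1+\<theta>))/(1+\<theta>)"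
      using th by (simp add: field_simps)
    show ?thesis unfolding n1 n2 n3 n4 using z th d1 by simp
  qed
  finally show ?thesis unfolding z_def .
qed


definition Dl :: "real \<Rightarrow> real" where
  "Dl a = 4*a^5 - 23*a^4 - 18*a^3 + 13*a^2 + 32"

lemma Dl_neg_low:
  assumes "5/2 \<le> a" "a \<le> 26/5" shows "Dl a < 0"
proof -
  have c: "4*a^2 - 23*a - 18 \<le> -29"
  proof -
    have "(a - 26/5) * (4*a - 11/5) \<le> 0"
      using assms by (intro mult_nonpos_nonneg) auto
    then show ?thesis by (simp add: power2_eq_square algebra_simps)
  qed
  have a3: "a^3 \<ge> 125/8"
  proof -
    have "(5/2::real)^3 \<le> a^3" using assms by (intro power_mono) auto
    then show ?thesis by (simp add: power_divide)
  qed
  have a2: "a^2 \<le> (26/5)^2" using assms by (intro power_mono) auto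
  have "a^3 * (4*a^2 - 23*a - 18) \<le> a^3 * (-29)"
    using c a3 assms by (intro mult_left_mono) auto
  moreover have "Dl a = a^3 * (4*a^2 - 23*a - 18) + 13*a^2 + 32"
    unfolding Dl_def by (simp add: algebra_simps power_numeral_reduce)
  moreover have "(26/5::real)^2 = 676/25" by (simp add: power_divide)
  ultimately show ?thesis using a3 a2 by linarith
qed

lemma Dl_deriv: "(Dl has_real_derivative (20*x^4 - 92*x^3 - 54*x^2 + 26*x)) (at x)"
  unfolding Dl_def[abs_def]
  by (auto intro!: derivative_eq_intros simp: power_numeral_reduce algebra_simps)

lemma Dl_deriv_pos: assumes "(x::real) \<ge> 26/5" shows "20*x^4 - 92*x^3 - 54*x^2 + 26*x > 0"
proof -
  have x0: "x > 0" using assms by simp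
  have "x^2 * (20*x - 92) \<ge> x^2 * 12" using assms by (intro mult_left_mono) auto
  moreover have "x * (12*x - 54) \<ge> x * (42/5)" using assms by (intro mult_left_mono) auto
  moreover have "20*x^3 - 92*x^2 = x^2 * (20*x - 92)" "12*x^2 - 54*x = x * (12*x - 54)"
    by (simp_all add: power2_eq_square power3_eq_cube algebra_simps)
  ultimately have "20*x^3 - 92*x^2 - 54*x + 26 > 0" using x0 by linarith
  then have "x * (20*x^3 - 92*x^2 - 54*x + 26) > 0" using x0 by simp
  then show ?thesis by (simp add: power_numeral_reduce algebra_simps)
qed

lemma Dl_mono: assumes "26/5 \<le> u" "u < v" shows "Dl u < Dl v"
proof (rule DERIV_pos_imp_increasing[OF assms(2)])
  fix x assume "u \<le> x" "x \<le> v"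
  then have "x \<ge> 26/5" using assms by simp
  then show "\<exists>y. DERIV Dl x :> y \<and> y > 0" using Dl_deriv Dl_deriv_pos by blast
qed

lemma Dl_637: "Dl (637/100) < 0" unfolding Dl_def by (simp add: power_divide)
lemma Dl_638: "Dl (638/100) > 0" unfolding Dl_def by (simp add: power_divide)

lemma Dl_cont: "continuous_on A Dl"
  unfolding Dl_def[abs_def] by (intro continuous_intros)

lemma acr_exists:
  "\<exists>c. 6.37 < c \<and> c < 6.38 \<and> Dl c = 0 \<and> (\<forall>a. 5/2 \<le> a \<and> a < c \<longrightarrow> Dl a < 0)
      \<and> (\<forall>a. c < a \<longrightarrow> Dl a > 0)"
proof -
  obtain c where c: "637/100 \<le> c" "c \<le> 638/100" "Dl c = 0"
    using IVT'[of Dl "637/100" 0 "638/100"] Dl_637 Dl_638 Dl_cont by force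
  have c1: "c \<noteq> 637/100" "c \<noteq> 638/100"
  proof -
    show "c \<noteq> 637/100" proof assume "c = 637/100" with c(3) Dl_637 show False by simp qed
    show "c \<noteq> 638/100" proof assume "c = 638/100" with c(3) Dl_638 show False by simp qed
  qed
  show ?thesis
  proof (intro exI conjI allI impI)
    show "6.37 < c" "c < 6.38" using c c1 by auto
    show "Dl c = 0" by fact
    fix a assume "5/2 \<le> a \<and> a < c"
    then show "Dl a < 0"
      using Dl_neg_low[of a] Dl_mono[of a c] c by (cases "a \<le> 26/5") auto
  next
    fix a assume "c < a" then show "Dl a > 0" using Dl_mono[of c a] c by auto
  qed
qed


definition R :: "real \<Rightarrow> real \<Rightarrow> real" where
  "R a s = a*s^2 + 2*s - a - a^2 - s^3"

definition S :: "real \<Rightarrow> real set" where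
  "S a = {s. 2 < s \<and> s < a + 1/a \<and> R a s = 0}"

lemma R2_neg: "R a 2 < 0"
proof -
  have "4 * R a 2 = -((2*a - 3)^2) - 7" unfolding R_def by (simp add: power2_eq_square algebra_simps)
  moreover have "(2*a-3)^2 \<ge> 0" by simp
  ultimately show ?thesis by linarith
qed

lemma Rmax_neg: assumes "a > 0" shows "R a (a + 1/a) < 0"
proof -
  have "R a (a + 1/a) = 0 - a^2 - 1/a^3" unfolding R_def using assms
    by (simp add: field_simps power2_eq_square power3_eq_cube)
  moreover have "1/a^3 > 0" using assms by simp
  moreover have "a^2 \<ge> 0" by simp
  ultimately show ?thesis by linarith
qed

lemma R_cont: "continuous_on A (R a)"
  unfolding R_def[abs_def] by (intro continuous_intros)

lemma R_low: assumes "1 < a" "a \<le> 5/2" "s > 2" shows "R a s < 0"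
proof -
  have d: "R a s - R a 2 = (s - 2) * (-(s^2+2*s+4) + a*(s+2) + 2)"
    unfolding R_def by (simp add: power2_eq_square power3_eq_cube algebra_simps)
  have "a*(s+2) \<le> 5/2*(s+2)" using assms by (intro mult_right_mono) auto
  moreover have "(s-2)*(s+3/2) > 0" using assms by simp
  moreover have "(s-2)*(s+3/2) = s*s - s/2 - 3" "a*(s+2) = a*s+2*a" "s^2 = s*s" "5/2*(s+2) = 5/2*s+5"
    by (simp_all add: power2_eq_square algebra_simps field_simps)
  ultimately have "-(s^2+2*s+4) + a*(s+2) + 2 < 0" by linarith
  then have "(s - 2) * (-(s^2+2*s+4) + a*(s+2) + 2) < 0" using assms
    by (simp add: mult_pos_neg)
  then show ?thesis using d R2_neg[of a] by linarith
qed


lemma p_facts: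
  fixes a :: real
  assumes a: "a > 5/2"
  defines "q \<equiv> sqrt (a^2+6)"
  defines "p \<equiv> (a+q)/3"
  shows "2 < p" "p < a + 1/a" "a - 2*p < 0"
    "\<And>s. R a s - R a p = (s-p)^2*(a - 2*p - s)"
    "27 * R a p = 2*q^3 - (-2*a^3+27*a^2+9*a)"
    "4*q^6 - (-2*a^3+27*a^2+9*a)^2 = 27 * Dl a"
    "q > 0"
proof -
  have q2: "q^2 = a^2+6" unfolding q_def by simp
  have q0: "q \<ge> 0" unfolding q_def by simp
  show qp: "q > 0" unfolding q_def by (simp add: add_nonneg_pos)
  have qa: "q > a"
  proof (rule ccontr)
    assume "\<not> q > a" then have "q^2 \<le> a^2" using q0 by (intro power_mono) auto
    then show False using q2 by simp
  qed
  have q6: "q > 6 - a"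
  proof (rule ccontr)
    assume "\<not> q > 6 - a" then have "q^2 \<le> (6-a)^2" using q0 by (intro power_mono) auto
    then show False using q2 a by (simp add: power2_eq_square algebra_simps)
  qed
  show "2 < p" unfolding p_def using q6 by simp
  show "a - 2*p < 0" unfolding p_def using qa a by (simp add: field_simps)
  have q3: "q < 2*a + 3/a"
  proof (rule ccontr)
    assume "\<not> q < 2*a + 3/a"
    moreover have "2*a + 3/a \<ge> 0" using a by simp
    ultimately have "(2*a+3/a)^2 \<le> q^2" by (intro power_mono) auto
    moreover have "(2*a+3/a)^2 = 4*a^2 + 12 + 9/a^2" using a
      by (simp add: power2_eq_square field_simps)
    moreover have "9/a^2 > 0" using a by simp
    ultimately show False using q2 by (smt (verit) zero_le_power2)
  qed
  show "p < a + 1/a" unfolding p_def using q3 by simp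
  have pp: "3*p^2 = 2*a*p + 2"
  proof -
    have "9*(3*p^2) = 3*(a+q)^2" unfolding p_def by (simp add: power2_eq_square)
    also have "\<dots> = 3*a^2 + 6*a*q + 3*q^2" by (simp add: power2_eq_square algebra_simps)
    also have "\<dots> = 9*(2*a*p+2)" unfolding q2 p_def by (simp add: power2_eq_square algebra_simps)
    finally show ?thesis by simp
  qed
  fix s
  have "R a s - R a p = (s-p)^2*(a - 2*p - s) + (s-p)*(2*a*p + 2 - 3*p^2)"
    unfolding R_def by (simp add: power2_eq_square power3_eq_cube algebra_simps)
  then show "R a s - R a p = (s-p)^2*(a - 2*p - s)" using pp by simp
next
  have q2: "q^2 = a^2+6" unfolding q_def by simp
  have "27 * R a p = 2*a^3 + 3*a^2*q - q^3 + 18*q - 9*a - 27*a^2"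
    unfolding R_def p_def by (simp add: power2_eq_square power3_eq_cube field_simps; simp add: algebra_simps)
  also have "3*a^2*q = 3*q^3 - 18*q"
  proof -
    have "a^2 = q^2 - 6" using q2 by simp
    then have "3*a^2*q = 3*(q^2-6)*q" by simp
    then show ?thesis by (simp add: power2_eq_square power3_eq_cube algebra_simps)
  qed
  finally show "27 * R a p = 2*q^3 - (-2*a^3+27*a^2+9*a)" by simp
next
  have q2: "q^2 = a^2+6" unfolding q_def by simp
  have "q^6 = (q^2)^3" by (simp add: power_mult[symmetric])
  then have "q^6 = (a^2+6)^3" using q2 by simp
  then show "4*q^6 - (-2*a^3+27*a^2+9*a)^2 = 27 * Dl a"
    unfolding Dl_def by (simp add: power2_eq_square power3_eq_cube power_numeral_reduce algebra_simps)
qed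


lemma R_poly: "poly [:-a-a^2, 2, a, -1:] x = R a x"
  unfolding R_def by (simp add: power2_eq_square power3_eq_cube algebra_simps)

lemma R_roots_card: "card {x. R a x = 0} \<le> 3" "finite {x. R a x = 0}"
proof -
  let ?P = "[:-a-a^2, 2, a, -1:]"
  have P0: "?P \<noteq> 0" by simp
  have "degree ?P = 3" by simp
  then show "card {x. R a x = 0} \<le> 3" using card_poly_roots_bound[OF P0] unfolding R_poly by simp
  show "finite {x. R a x = 0}" using poly_roots_finite[OF P0] unfolding R_poly .
qed

lemma S_empty_low: "1 < a \<Longrightarrow> a \<le> 5/2 \<Longrightarrow> S a = {}"
  unfolding S_def using R_low by force

lemma S_empty_neg:
  assumes a: "a > 5/2" and n: "R a ((a + sqrt (a^2+6))/3) < 0" shows "S a = {}"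
proof -
  let ?p = "(a + sqrt (a^2+6))/3"
  have "R a s < 0" if "s > 2" for s
  proof -
    have d: "R a s - R a ?p = (s - ?p)^2*(a - 2*?p - s)" using p_facts(4)[OF a] .
    have "a - 2*?p - s < 0" using p_facts(3)[OF a] that by linarith
    then have "(s - ?p)^2*(a - 2*?p - s) \<le> 0" by (simp add: mult_nonneg_nonpos)
    then show ?thesis using d n by linarith
  qed
  then show ?thesis unfolding S_def by force
qed

lemma S_single:
  assumes a: "a > 5/2" and n: "R a ((a + sqrt (a^2+6))/3) = 0" shows "S a = {(a + sqrt (a^2+6))/3}"
proof -
  let ?p = "(a + sqrt (a^2+6))/3"
  have "s = ?p" if "s > 2" "R a s = 0" for s
  proof -
    have d: "R a s - R a ?p = (s - ?p)^2*(a - 2*?p - s)" using p_facts(4)[OF a] .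
    have "a - 2*?p - s < 0" using p_facts(3)[OF a] that by linarith
    moreover have "(s - ?p)^2*(a - 2*?p - s) = 0" using d n that by simp
    ultimately show ?thesis by simp
  qed
  moreover have "?p \<in> S a" unfolding S_def using p_facts(1,2)[OF a] n by simp
  ultimately show ?thesis unfolding S_def by blast
qed

lemma S_two:
  assumes a: "a > 5/2" and n: "R a ((a + sqrt (a^2+6))/3) > 0" shows "card (S a) = 2"
proof -
  define p where "p = (a + sqrt (a^2+6))/3"
  have p2: "2 < p" "p < a + 1/a" unfolding p_def using p_facts(1,2)[OF a] by auto
  have Rp: "R a p > 0" using n unfolding p_def .
  obtain r2 where r2: "2 \<le> r2" "r2 \<le> p" "R a r2 = 0"
    using IVT'[of "R a" 2 0 p] R2_neg[of a] Rp p2 R_cont by force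
  obtain r3 where r3: "p \<le> r3" "r3 \<le> a + 1/a" "R a r3 = 0"
    using IVT2'[of "R a" "a + 1/a" 0 p] Rmax_neg[of a] a Rp p2 R_cont by force
  have Rm: "R a (-a-2) > 0"
  proof -
    have "R a (-a-2) = 2*a^3 + 9*a^2 + 13*a + 4"
      unfolding R_def by (simp add: power2_eq_square power3_eq_cube algebra_simps)
    moreover have "a^3 > 0" "a^2 > 0" using a by simp_all
    ultimately show ?thesis using a by linarith
  qed
  obtain r1 where r1: "-a-2 \<le> r1" "r1 \<le> 2" "R a r1 = 0"
    using IVT2'[of "R a" 2 0 "-a-2"] R2_neg[of a] Rm a R_cont by force
  have r2' : "r2 \<noteq> 2" "r2 \<noteq> p" using r2 R2_neg[of a] Rp by auto
  have r3' : "r3 \<noteq> p" "r3 \<noteq> a + 1/a" using r3 Rmax_neg[of a] a Rp by auto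
  have r1': "r1 \<noteq> 2" using r1 R2_neg[of a] by auto
  have sub1: "{r2, r3} \<subseteq> S a" unfolding S_def using r2 r3 r2' r3' p2 by auto
  have sub2: "S a \<subseteq> {x. R a x = 0} - {r1}" unfolding S_def using r1 r1' by auto
  have fin: "finite (S a)" using R_roots_card(2) sub2 by (meson finite_Diff finite_subset)
  have "card (S a) \<le> card ({x. R a x = 0} - {r1})"
    using sub2 R_roots_card(2) by (intro card_mono) auto
  also have "\<dots> = card {x. R a x = 0} - 1" using r1 R_roots_card(2) by (simp add: card_Diff_singleton)
  also have "\<dots> \<le> 2" using R_roots_card(1)[of a] by simp
  finally have le: "card (S a) \<le> 2" .
  have "r2 \<noteq> r3" using r2 r3 r2' r3' by auto
  then have "card {r2, r3} = 2" by simp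
  then have "2 \<le> card (S a)" using card_mono[OF fin sub1] by simp
  with le show ?thesis by simp
qed


lemma T_pos: assumes "0 < a" "a \<le> 638/100" shows "-2*a^3+27*a^2+9*a > (0::real)"
proof -
  have "a * (2*a) \<le> a * (2*638/100)" using assms by (intro mult_left_mono) auto
  then have "2*a^2 \<le> 1276/100*a" by (simp add: power2_eq_square algebra_simps)
  then have "-2*a^2 + 27*a + 9 > 0" using assms by linarith
  then have "a * (-2*a^2 + 27*a + 9) > 0" using assms by simp
  then show ?thesis by (simp add: power2_eq_square power3_eq_cube algebra_simps)
qed

lemma S_cases:
  assumes a1: "a > 1"
  shows "a \<le> 638/100 \<Longrightarrow> (a \<le> 5/2 \<or> Dl a < 0) \<Longrightarrow> card (S a) = 0"
    and "5/2 < a \<Longrightarrow> a \<le> 638/100 \<Longrightarrow> Dl a = 0 \<Longrightarrow> card (S a) = 1"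
    and "5/2 < a \<Longrightarrow> Dl a > 0 \<Longrightarrow> card (S a) = 2"
proof -
  define q where "q = sqrt (a^2+6)"
  define Y where "Y = -2*a^3+27*a^2+9*a"
  define X where "X = 2*q^3"
  have XX: "X^2 = 4*q^6" unfolding X_def by (simp add: power_mult_distrib power_mult[symmetric])
  {
    assume a: "5/2 < a"
    have q0: "q > 0" using p_facts(7)[OF a] unfolding q_def .
    have X0: "X > 0" unfolding X_def using q0 by simp
    have e1: "27 * R a ((a+q)/3) = X - Y" using p_facts(5)[OF a] unfolding X_def Y_def q_def .
    have e2: "X^2 - Y^2 = 27 * Dl a" using p_facts(6)[OF a] unfolding XX Y_def q_def .
    note q0 X0 e1 e2
  } note A = this
  show "card (S a) = 0" if h: "a \<le> 638/100" "a \<le> 5/2 \<or> Dl a < 0"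
  proof (cases "a \<le> 5/2")
    case True then show ?thesis using S_empty_low[OF a1] by simp
  next
    case False
    then have a: "5/2 < a" by simp
    have Dn: "Dl a < 0" using h False by simp
    have Yp: "Y > 0" unfolding Y_def using T_pos[of a] h a1 by simp
    have "X < Y"
    proof (rule ccontr)
      assume "\<not> X < Y" then have "Y^2 \<le> X^2" using Yp by (intro power_mono) auto
      then show False using A(4)[OF a] Dn by simp
    qed
    then have "R a ((a+q)/3) < 0" using A(3)[OF a] by simp
    then show ?thesis using S_empty_neg[OF a] unfolding q_def by simp
  qed
  show "card (S a) = 1" if a: "5/2 < a" and h: "a \<le> 638/100" "Dl a = 0"
  proof -
    have Yp: "Y > 0" unfolding Y_def using T_pos[of a] h a1 by simp
    have "X^2 = Y^2" using A(4)[OF a] h by simp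
    then have "X = Y" using Yp A(2)[OF a] by (simp add: power2_eq_iff_nonneg)
    then have "R a ((a+q)/3) = 0" using A(3)[OF a] by simp
    then show ?thesis using S_single[OF a] unfolding q_def by simp
  qed
  show "card (S a) = 2" if a: "5/2 < a" and h: "Dl a > 0"
  proof -
    have "X > Y"
    proof (rule ccontr)
      assume "\<not> X > Y" then have "X^2 \<le> Y^2" using A(2)[OF a] by (intro power_mono) auto
      then show False using A(4)[OF a] h by simp
    qed
    then have "R a ((a+q)/3) > 0" using A(3)[OF a] by simp
    then show ?thesis using S_two[OF a] unfolding q_def by simp
  qed
qed


definition Fm :: "real \<Rightarrow> real \<Rightarrow> real" where
  "Fm a z = (z + a) / (a*z + 1)"

definition G :: "nat \<Rightarrow> real \<Rightarrow> real \<Rightarrow> real" where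
  "G k \<theta> y = y + (real k - 1) * fI y \<theta> + fI (real k * fI y \<theta>) \<theta>"

lemma fI_odd: assumes "\<bar>\<theta>\<bar> < 1" shows "fI (-h) \<theta> = - fI h \<theta>"
proof -
  have t: "\<bar>tanh h\<bar> < 1" using tanh_real_bounds[of h] by auto
  have v: "\<bar>\<theta> * tanh h\<bar> < 1" using abs_mult_less[OF assms t] by (simp add: abs_mult)
  show ?thesis unfolding fI_def using artanh_minus_real[OF v] by simp
qed

lemma fI_0: "fI 0 \<theta> = 0" unfolding fI_def by simp

lemma WP_image:
  assumes th: "\<bar>\<theta>\<bar> < 1"
  shows "{h\<in>I3. wp_system k \<theta> h} =
    (\<lambda>y. (-(real k * fI y \<theta>), y, -y, real k * fI y \<theta>)) ` {y. G k \<theta> y = 0}"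
proof (intro set_eqI iffI)
  fix h assume hm: "h \<in> {h\<in>I3. wp_system k \<theta> h}"
  obtain h1 h2 h3 h4 where hh: "h = (h1,h2,h3,h4)" by (cases h) auto
  have I: "(h1,h2,h3,h4) \<in> I3" and W: "wp_system k \<theta> (h1,h2,h3,h4)" using hm hh by auto
  have i1: "h1 = -h4" "h2 = -h3" using I unfolding I3_def by auto
  have w1: "h1 = real k * fI h3 \<theta> \<and> h2 = (real k - 1) * fI h3 \<theta> + fI h1 \<theta> \<and>
      h3 = (real k - 1) * fI h2 \<theta> + fI h4 \<theta> \<and> h4 = real k * fI h2 \<theta>"
    using W unfolding wp_system_def prod.case by assumption
  have h3: "h3 = -h2" using i1(2) by linarith
  have h4: "h4 = real k * fI h2 \<theta>" using w1 by blast
  have h1: "h1 = -(real k * fI h2 \<theta>)" using i1(1) h4 by linarith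
  have e: "h2 = (real k - 1) * fI h3 \<theta> + fI h1 \<theta>" using w1 by blast
  have o1: "fI h3 \<theta> = - fI h2 \<theta>" unfolding h3 by (rule fI_odd[OF th])
  have o2: "fI h1 \<theta> = - fI (real k * fI h2 \<theta>) \<theta>" unfolding h1 by (rule fI_odd[OF th])
  have "(real k - 1) * fI h3 \<theta> + fI h1 \<theta> = -((real k - 1) * fI h2 \<theta>) - fI (real k * fI h2 \<theta>) \<theta>"
    unfolding o1 o2 by (simp add: algebra_simps)
  then have "G k \<theta> h2 = 0" using e unfolding G_def by linarith
  moreover have "h = (-(real k * fI h2 \<theta>), h2, -h2, real k * fI h2 \<theta>)"
    unfolding hh h1 h3 h4 ..
  ultimately show "h \<in> (\<lambda>y. (-(real k * fI y \<theta>), y, -y, real k * fI y \<theta>)) ` {y. G k \<theta> y = 0}"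
    by (intro rev_image_eqI[of h2]) auto
next
  fix h assume "h \<in> (\<lambda>y. (-(real k * fI y \<theta>), y, -y, real k * fI y \<theta>)) ` {y. G k \<theta> y = 0}"
  then obtain y where y: "G k \<theta> y = 0" "h = (-(real k * fI y \<theta>), y, -y, real k * fI y \<theta>)" by auto
  have g: "y + (real k - 1) * fI y \<theta> + fI (real k * fI y \<theta>) \<theta> = 0" using y(1) unfolding G_def .
  have o1: "fI (-y) \<theta> = - fI y \<theta>" by (rule fI_odd[OF th])
  have o2: "fI (-(real k * fI y \<theta>)) \<theta> = - fI (real k * fI y \<theta>) \<theta>" by (rule fI_odd[OF th])
  have e1: "-(real k * fI y \<theta>) = real k * fI (-y) \<theta>" unfolding o1 by simp
  have r: "(real k - 1) * fI (-y) \<theta> + fI (-(real k * fI y \<theta>)) \<theta> = -((real k - 1) * fI y \<theta>) - fI (real k * fI y \<theta>) \<theta>"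
    unfolding o1 o2 by (simp add: algebra_simps)
  have e2: "y = (real k - 1) * fI (-y) \<theta> + fI (-(real k * fI y \<theta>)) \<theta>"
    using r g by linarith
  have e3: "-y = (real k - 1) * fI y \<theta> + fI (real k * fI y \<theta>) \<theta>" using g by linarith
  have "(-(real k * fI y \<theta>), y, -y, real k * fI y \<theta>) \<in> I3" unfolding I3_def by simp
  moreover have "wp_system k \<theta> (-(real k * fI y \<theta>), y, -y, real k * fI y \<theta>)"
    unfolding wp_system_def prod.case using e1 e2 e3 by blast
  ultimately show "h \<in> {h\<in>I3. wp_system k \<theta> h}" unfolding y(2) by blast
qed

lemma exp2_fI': "\<bar>\<theta>\<bar> < 1 \<Longrightarrow> exp (2 * fI h \<theta>) = Fm ((1-\<theta>)/(1+\<theta>)) (exp (2*h))"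
  unfolding Fm_def by (rule exp2_fI)

lemma G_exp:
  assumes th: "\<bar>\<theta>\<bar> < 1" and k: "k \<ge> 1"
  defines "a \<equiv> (1-\<theta>)/(1+\<theta>)"
  shows "exp (2 * G k \<theta> y) = exp (2*y) * (Fm a (exp (2*y)))^(k-1) * Fm a ((Fm a (exp (2*y)))^k)"
proof -
  have w: "exp (2 * fI y \<theta>) = Fm a (exp (2*y))" unfolding a_def using exp2_fI'[OF th] .
  have rk: "real k - 1 = real (k-1)" using k by simp
  have "exp (2 * G k \<theta> y) = exp (2*y) * exp (real (k-1) * (2 * fI y \<theta>)) * exp (2 * fI (real k * fI y \<theta>) \<theta>)"
    unfolding G_def rk by (simp add: exp_add[symmetric] algebra_simps)
  also have "exp (real (k-1) * (2 * fI y \<theta>)) = (Fm a (exp (2*y)))^(k-1)"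
    unfolding exp_of_nat_mult w ..
  also have "exp (2 * fI (real k * fI y \<theta>) \<theta>) = Fm a (exp (2*(real k * fI y \<theta>)))"
    unfolding a_def using exp2_fI'[OF th] .
  also have "exp (2*(real k * fI y \<theta>)) = (Fm a (exp (2*y)))^k"
    using exp_of_nat_mult[of k "2 * fI y \<theta>"] w by (simp add: algebra_simps)
  finally show ?thesis .
qed


lemma Fm_range: assumes "a > 1" "z > 0" shows "1/a < Fm a z" "Fm a z < a"
proof -
  have d: "a*z + 1 > 0" using assms by (simp add: add_pos_pos)
  have "a*a > 1" using assms by (metis less_1_mult)
  then have "a*(z+a) > a*z + 1" by (simp add: algebra_simps)
  then show "1/a < Fm a z" unfolding Fm_def using assms d by (simp add: field_simps)
  have aa: "a*a > 1" using assms by (metis less_1_mult)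
  have "z*1 < z*(a*a)" using aa assms(2) by (rule mult_strict_left_mono)
  then have "z + a < a*(a*z+1)" by (simp add: algebra_simps)
  then show "Fm a z < a" unfolding Fm_def using d by (simp add: field_simps)
qed

lemma Fm_inv: assumes "a > 1" "z > 0" "w = Fm a z" shows "a*w - 1 > 0" "z = (a-w)/(a*w-1)"
proof -
  have d: "a*z + 1 > 0" using assms by (simp add: add_pos_pos)
  have "1/a < w" using Fm_range assms by simp
  then show p: "a*w - 1 > 0" using assms by (simp add: field_simps)
  have "w*(a*z+1) = z + a" using assms d unfolding Fm_def by simp
  then have "z*(a*w-1) = a - w" by (simp add: algebra_simps)
  then show "z = (a-w)/(a*w-1)" using p by (simp add: field_simps)
qed

lemma Fm_of_inv: assumes "a > 1" "1/a < w" "w < a"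
  shows "(a-w)/(a*w-1) > 0" "Fm a ((a-w)/(a*w-1)) = w"
proof -
  have p: "a*w - 1 > 0" using assms by (simp add: field_simps)
  show "(a-w)/(a*w-1) > 0" using p assms by simp
  have n: "(a-w)/(a*w-1) + a = w*(a*a-1)/(a*w-1)" using p by (simp add: field_simps algebra_simps)
  have dd: "a*((a-w)/(a*w-1)) + 1 = (a*a-1)/(a*w-1)" using p by (simp add: field_simps algebra_simps)
  have "a*a - 1 > 0" using assms by (simp add: less_1_mult)
  then show "Fm a ((a-w)/(a*w-1)) = w" unfolding Fm_def n dd using p by simp
qed

lemma Fm_inj: assumes "a > 1" "z1 > 0" "z2 > 0" "Fm a z1 = Fm a z2" shows "z1 = z2"
  using Fm_inv[OF assms(1,2) refl] Fm_inv[OF assms(1,3) refl] assms(4) by simp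

lemma key:
  assumes a: "a > 1" and z: "z > 0" and w: "w = Fm a z"
  shows "(z * w^(k-1) * Fm a (w^k) = 1) \<longleftrightarrow> ((a-w)*w^(k-1)*(w^k+a) = (a*w-1)*(a*w^k+1))"
proof -
  have p: "a*w - 1 > 0" and zz: "z = (a-w)/(a*w-1)" using Fm_inv[OF a z w] by auto
  have "1/a > 0" using a by simp
  then have w0: "w > 0" using Fm_range(1)[OF a z] w by linarith
  have d: "a*w^k + 1 > 0" using w0 a by (simp add: add_pos_pos)
  have "z * w^(k-1) * Fm a (w^k) = ((a-w)*w^(k-1)*(w^k+a)) / ((a*w-1)*(a*w^k+1))"
    unfolding zz Fm_def by simp
  then show ?thesis using p d by auto
qed

definition Wset :: "nat \<Rightarrow> real \<Rightarrow> real set" where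
  "Wset k a = {w. 1/a < w \<and> w < a \<and> (a-w)*w^(k-1)*(w^k+a) = (a*w-1)*(a*w^k+1)}"

lemma G_zero_iff:
  assumes th: "\<bar>\<theta>\<bar> < 1" and k: "k \<ge> 1" and a: "(1-\<theta>)/(1+\<theta>) > 1"
  shows "G k \<theta> y = 0 \<longleftrightarrow> Fm ((1-\<theta>)/(1+\<theta>)) (exp (2*y)) \<in> Wset k ((1-\<theta>)/(1+\<theta>))"
proof -
  define a where "a = (1-\<theta>)/(1+\<theta>)"
  have a1: "a > 1" using a unfolding a_def .
  define w where "w = Fm a (exp (2*y))"
  have "G k \<theta> y = 0 \<longleftrightarrow> exp (2 * G k \<theta> y) = 1" by simp
  also have "\<dots> \<longleftrightarrow> exp (2*y) * w^(k-1) * Fm a (w^k) = 1"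
    using G_exp[OF th k] unfolding a_def w_def by simp
  also have "\<dots> \<longleftrightarrow> (a-w)*w^(k-1)*(w^k+a) = (a*w-1)*(a*w^k+1)"
    using key[OF a1 _ w_def] by simp
  also have "\<dots> \<longleftrightarrow> w \<in> Wset k a"
    unfolding Wset_def using Fm_range[OF a1, of "exp (2*y)"] w_def by simp
  finally show ?thesis unfolding w_def a_def .
qed

lemma card_G:
  assumes th: "\<bar>\<theta>\<bar> < 1" and k: "k \<ge> 1" and a: "(1-\<theta>)/(1+\<theta>) > 1"
  shows "card {y. G k \<theta> y = 0} = card (Wset k ((1-\<theta>)/(1+\<theta>)))"
proof -
  define a where "a = (1-\<theta>)/(1+\<theta>)"
  have a1: "a > 1" using a unfolding a_def .
  have GZ: "G k \<theta> y = 0 \<longleftrightarrow> Fm a (exp (2*y)) \<in> Wset k a" for y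
    using G_zero_iff[OF th k a] unfolding a_def .
  define \<Phi> where "\<Phi> y = Fm a (exp (2*y))" for y
  have inj: "inj \<Phi>"
  proof (rule injI)
    fix x y assume "\<Phi> x = \<Phi> y"
    then have "Fm a (exp (2*x)) = Fm a (exp (2*y))" unfolding \<Phi>_def .
    then have "exp (2*x) = exp (2*y)" using Fm_inj[OF a1 exp_gt_zero exp_gt_zero] by blast
    then show "x = y" by simp
  qed
  have img: "\<Phi> ` {y. G k \<theta> y = 0} = Wset k a"
  proof (intro set_eqI iffI)
    fix w assume "w \<in> \<Phi> ` {y. G k \<theta> y = 0}"
    then obtain y where y: "G k \<theta> y = 0" "w = \<Phi> y" by blast
    have "Fm a (exp (2*y)) \<in> Wset k a" using GZ[of y] y(1) by simp
    then show "w \<in> Wset k a" unfolding y(2) \<Phi>_def .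
  next
    fix w assume wW: "w \<in> Wset k a"
    then have wr: "1/a < w" "w < a" unfolding Wset_def by auto
    define y where "y = ln ((a-w)/(a*w-1)) / 2"
    have "exp (2*y) = (a-w)/(a*w-1)" unfolding y_def using Fm_of_inv(1)[OF a1 wr] by simp
    then have py: "\<Phi> y = w" unfolding \<Phi>_def using Fm_of_inv(2)[OF a1 wr] by simp
    have "Fm a (exp (2*y)) \<in> Wset k a" using wW py unfolding \<Phi>_def by simp
    then have "G k \<theta> y = 0" using GZ[of y] by simp
    then show "w \<in> \<Phi> ` {y. G k \<theta> y = 0}" using py by blast
  qed
  have "card {y. G k \<theta> y = 0} = card (\<Phi> ` {y. G k \<theta> y = 0})"
    using inj_on_subset[OF inj subset_UNIV] by (intro card_image[symmetric])
  then show ?thesis using img unfolding a_def by simp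
qed


lemma sq1: "(w::real) > 0 \<Longrightarrow> w^2 - 1 = 0 \<Longrightarrow> w = 1"
proof -
  assume "w > 0" "w^2 - 1 = 0"
  then have "(w-1)*(w+1) = 0" by (simp add: power2_eq_square algebra_simps)
  then show "w = 1" using \<open>w > 0\<close> by simp
qed

lemma W_small:
  fixes a w :: real
  assumes a: "a > 1" and w: "w > 0" and k: "k \<in> {1,2,3}"
    and e: "(a-w)*w^(k-1)*(w^k+a) = (a*w-1)*(a*w^k+1)"
  shows "w = 1"
proof -
  have "\<exists>Q. (a-w)*w^(k-1)*(w^k+a) - (a*w-1)*(a*w^k+1) = (w^2-1)*Q \<and> Q < 0"
  proof -
    consider "k = 1" | "k = 2" | "k = 3" using k by auto
    then show ?thesis
    proof cases
      case 1
      have "(a-w)*w^(k-1)*(w^k+a) - (a*w-1)*(a*w^k+1) = (w^2-1)*(-(1+a^2))"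
        unfolding 1 by (simp add: power2_eq_square algebra_simps)
      moreover have "a^2 \<ge> 0" by simp
      then have "-(1+a^2) < (0::real)" by linarith
      ultimately show ?thesis by blast
    next
      case 2
      have eq: "(a-w)*w^(k-1)*(w^k+a) - (a*w-1)*(a*w^k+1) = (w^2-1)*(-(w^2+1) + (a-a^2)*w)"
        unfolding 2 by (simp add: power2_eq_square power3_eq_cube algebra_simps)
      have "a - a^2 < 0" using a by (simp add: power2_eq_square)
      then have "(a-a^2)*w < 0" using w by (simp add: mult_neg_pos)
      moreover have "w^2 \<ge> 0" by simp
      ultimately have "-(w^2+1) + (a-a^2)*w < 0" by linarith
      with eq show ?thesis by blast
    next
      case 3
      define Q where "Q = -(w^4+w^2+1) + a*w^3 + a*w - a^2*w^2"
      define P where "P = 3*w^4+2*w^2+3"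
      define X where "X = (2*a*w - (w^2+1))^2"
      have eq: "(a-w)*w^(k-1)*(w^k+a) - (a*w-1)*(a*w^k+1) = (w^2-1)*Q"
        unfolding 3 Q_def by (simp add: power2_eq_square power3_eq_cube power_numeral_reduce algebra_simps)
      have "4*Q = -X - P" unfolding Q_def X_def P_def
        by (simp add: power2_eq_square power3_eq_cube power_numeral_reduce algebra_simps)
      moreover have "P > 0" unfolding P_def using w by (simp add: add_pos_pos)
      moreover have "X \<ge> 0" unfolding X_def by simp
      ultimately have "Q < 0" by linarith
      with eq show ?thesis by blast
    qed
  qed
  then obtain Q where "(w^2-1)*Q = 0" "Q < 0" using e by auto
  then have "w^2 - 1 = 0" by simp
  then show ?thesis using sq1 w by blast
qed

lemma W4_poly:
  assumes w: "w > 0"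
  shows "(a-w)*w^(4-1)*(w^4+a) - (a*w-1)*(a*w^4+1) = (w^2-1)*(w^3*R a (w+1/w))"
proof -
  have gen: "w^3 * R a s = a*w*(w*s)^2 + 2*w^2*(w*s) - (a + a^2)*w^3 - (w*s)^3" for s
    unfolding R_def by (simp add: power2_eq_square power3_eq_cube algebra_simps)
  have ws: "w*(w+1/w) = w^2+1" using w by (simp add: field_simps power2_eq_square)
  have eq: "w^3*R a (w+1/w) = a*w*(w^2+1)^2 + 2*w^2*(w^2+1) - (a + a^2)*w^3 - (w^2+1)^3"
    using gen[of "w+1/w"] unfolding ws .
  show ?thesis unfolding eq by (simp add: power2_eq_square power3_eq_cube power_numeral_reduce algebra_simps)
qed


lemma sum_lt:
  fixes a w :: real assumes a: "a > 1" and w: "w > 0"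
  shows "(1/a < w \<and> w < a) \<longleftrightarrow> w + 1/w < a + 1/a"
proof -
  have aw: "a*w > 0" using a w by simp
  have id: "(w + 1/w) - (a + 1/a) = ((w - a)*(a*w - 1))/(a*w)"
    using a w by (simp add: field_simps)
  have "w + 1/w < a + 1/a \<longleftrightarrow> (w - a)*(a*w - 1) < 0"
  proof -
    have "w + 1/w < a + 1/a \<longleftrightarrow> ((w - a)*(a*w - 1))/(a*w) < 0" using id by linarith
    also have "\<dots> \<longleftrightarrow> (w - a)*(a*w - 1) < 0" using aw by (simp add: divide_less_0_iff)
    finally show ?thesis .
  qed
  also have "\<dots> \<longleftrightarrow> (1/a < w \<and> w < a)"
  proof
    assume h: "(w - a)*(a*w - 1) < 0"
    show "1/a < w \<and> w < a"
    proof (cases "w < a")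
      case True
      then have "a*w - 1 > 0" using h by (simp add: mult_less_0_iff)
      then show ?thesis using True a by (simp add: field_simps)
    next
      case False
      then have "w \<ge> a" by simp
      then have "a*1 \<le> a*w" using a by (intro mult_left_mono) auto
      then have "a*w - 1 > 0" using a by linarith
      moreover have "w - a \<ge> 0" using \<open>w \<ge> a\<close> by simp
      ultimately have "(w - a)*(a*w - 1) \<ge> 0" by simp
      then show ?thesis using h by simp
    qed
  next
    assume "1/a < w \<and> w < a"
    then have "a*w - 1 > 0" "w - a < 0" using a by (auto simp: field_simps)
    then show "(w - a)*(a*w - 1) < 0" by (simp add: mult_neg_pos)
  qed
  finally show ?thesis by blast
qed

lemma w_gt2: fixes w :: real assumes w: "w > 0" shows "w \<noteq> 1 \<longleftrightarrow> w + 1/w > 2"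
proof -
  have "w + 1/w - 2 = (w-1)^2/w" using w by (simp add: field_simps power2_eq_square)
  moreover have "(w-1)^2/w > 0 \<longleftrightarrow> w \<noteq> 1" using w by (simp add: zero_less_divide_iff)
  ultimately show ?thesis by linarith
qed

lemma Wset4:
  assumes a: "a > 1"
  shows "Wset 4 a = insert 1 {w. w > 0 \<and> w + 1/w \<in> S a}"
proof (intro set_eqI iffI)
  fix w assume "w \<in> Wset 4 a"
  then have r: "1/a < w" "w < a" and e: "(a-w)*w^(4-1)*(w^4+a) = (a*w-1)*(a*w^4+1)"
    unfolding Wset_def by auto
  have "1/a > 0" using a by simp
  then have w0: "w > 0" using r by linarith
  have "(w^2-1)*(w^3*R a (w+1/w)) = 0" using W4_poly[OF w0, of a] e by simp
  then have "w^2 - 1 = 0 \<or> R a (w+1/w) = 0" using w0 by simp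
  then show "w \<in> insert 1 {w. w > 0 \<and> w + 1/w \<in> S a}"
  proof
    assume "w^2 - 1 = 0" then have "w = 1" using sq1 w0 by blast
    then show ?thesis by simp
  next
    assume R0: "R a (w+1/w) = 0"
    show ?thesis
    proof (cases "w = 1")
      case True then show ?thesis by simp
    next
      case False
      then have "w + 1/w > 2" using w_gt2 w0 by blast
      moreover have "w + 1/w < a + 1/a" using sum_lt[OF a w0] r by blast
      ultimately show ?thesis using R0 w0 unfolding S_def by simp
    qed
  qed
next
  fix w assume "w \<in> insert 1 {w. w > 0 \<and> w + 1/w \<in> S a}"
  then consider "w = 1" | "w > 0" "w + 1/w \<in> S a" by blast
  then show "w \<in> Wset 4 a"
  proof cases
    case 1
    have "1/a < 1" using a by simp
    then show ?thesis unfolding Wset_def 1 using a by simp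
  next
    case 2
    then have s: "w + 1/w < a + 1/a" "R a (w + 1/w) = 0" unfolding S_def by auto
    have r: "1/a < w" "w < a" using sum_lt[OF a 2(1)] s by blast+
    have "(a-w)*w^(4-1)*(w^4+a) - (a*w-1)*(a*w^4+1) = 0" using W4_poly[OF 2(1), of a] s by simp
    then show ?thesis unfolding Wset_def using r by simp
  qed
qed


definition rho :: "real \<Rightarrow> real" where "rho s = (s + sqrt (s^2 - 4))/2"
definition rho' :: "real \<Rightarrow> real" where "rho' s = (s - sqrt (s^2 - 4))/2"

lemma rho_facts:
  assumes s: "s > 2"
  shows "rho s > 1" "rho' s > 0" "rho' s < 1" "rho s + 1/rho s = s" "rho' s + 1/rho' s = s"
    "\<And>w. w > 0 \<Longrightarrow> w + 1/w = s \<Longrightarrow> w = rho s \<or> w = rho' s"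
proof -
  define r where "r = sqrt (s^2 - 4)"
  have "(2::real)^2 < s^2" using s by (intro power_strict_mono) auto
  then have s2: "s^2 > 4" by simp
  have r2: "r^2 = s^2 - 4" unfolding r_def using s2 by simp
  have r0: "r > 0" unfolding r_def using s2 by simp
  have rs: "r < s"
  proof (rule ccontr)
    assume "\<not> r < s" then have "s^2 \<le> r^2" using s by (intro power_mono) auto
    then show False using r2 by simp
  qed
  have rr: "rho s = (s + r)/2" "rho' s = (s - r)/2" unfolding rho_def rho'_def r_def by auto
  have prod: "rho s * rho' s = 1" unfolding rr using r2 by (simp add: power2_eq_square field_simps)
  have sum: "rho s + rho' s = s" unfolding rr by (simp add: field_simps)
  have p1: "rho s > 0" "rho' s > 0" unfolding rr using r0 rs s by auto
  then show "rho' s > 0" by simp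
  have inv1: "1/rho s = rho' s" using prod p1 by (simp add: field_simps)
  have inv2: "1/rho' s = rho s" using prod p1 by (simp add: field_simps)
  show "rho s + 1/rho s = s" using inv1 sum by simp
  show "rho' s + 1/rho' s = s" using inv2 sum by simp
  have lt: "rho' s < rho s" unfolding rr using r0 by simp
  show "rho s > 1"
  proof (rule ccontr)
    assume "\<not> rho s > 1"
    then have "rho s * rho' s \<le> 1 * rho' s" using p1 by (intro mult_right_mono) auto
    then have "rho s * rho' s < 1" using lt \<open>\<not> rho s > 1\<close> by linarith
    then show False using prod by simp
  qed
  show "rho' s < 1"
  proof (rule ccontr)
    assume "\<not> rho' s < 1"
    then have "rho s * 1 \<le> rho s * rho' s" using p1 by (intro mult_left_mono) auto
    then have "1 < rho s * rho' s" using lt \<open>\<not> rho' s < 1\<close> by linarith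
    then show False using prod by simp
  qed
  fix w assume w: "w > 0" "w + 1/w = s"
  have "w*w - s*w + 1 = 0" using w by (simp add: field_simps)
  moreover have "(w - rho s)*(w - rho' s) = w*w - (rho s + rho' s)*w + rho s * rho' s"
    by (simp add: algebra_simps)
  then have "(w - rho s)*(w - rho' s) = w*w - s*w + 1" unfolding sum prod .
  ultimately show "w = rho s \<or> w = rho' s" by simp
qed

lemma card_T:
  fixes A :: "real set"
  assumes fin: "finite A" and A: "\<And>s. s \<in> A \<Longrightarrow> s > 2"
  shows "card {w. w > 0 \<and> w + 1/w \<in> A} = 2 * card A"
proof -
  have eq: "{w. w > 0 \<and> w + 1/w \<in> A} = rho ` A \<union> rho' ` A"
  proof (intro set_eqI iffI)
    fix w assume "w \<in> {w. w > 0 \<and> w + 1/w \<in> A}"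
    then have w: "w > 0" "w + 1/w \<in> A" by auto
    then have "w = rho (w + 1/w) \<or> w = rho' (w + 1/w)" using rho_facts(6)[OF A[OF w(2)] w(1)] by simp
    then show "w \<in> rho ` A \<union> rho' ` A" using w(2) by blast
  next
    fix w assume "w \<in> rho ` A \<union> rho' ` A"
    then obtain s where s: "s \<in> A" "w = rho s \<or> w = rho' s" by blast
    then show "w \<in> {w. w > 0 \<and> w + 1/w \<in> A}"
      using rho_facts(1,2,4,5)[OF A[OF s(1)]] by auto
  qed
  have i1: "inj_on rho A"
  proof (rule inj_onI)
    fix x y assume xy: "x \<in> A" "y \<in> A" "rho x = rho y"
    have "x = rho x + 1/rho x" using rho_facts(4)[OF A[OF xy(1)]] by simp
    moreover have "y = rho y + 1/rho y" using rho_facts(4)[OF A[OF xy(2)]] by simp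
    ultimately
    show "x = y" using xy(3) by simp
  qed
  have i2: "inj_on rho' A"
  proof (rule inj_onI)
    fix x y assume xy: "x \<in> A" "y \<in> A" "rho' x = rho' y"
    have "x = rho' x + 1/rho' x" using rho_facts(5)[OF A[OF xy(1)]] by simp
    moreover have "y = rho' y + 1/rho' y" using rho_facts(5)[OF A[OF xy(2)]] by simp
    ultimately
    show "x = y" using xy(3) by simp
  qed
  have disj: "rho ` A \<inter> rho' ` A = {}"
  proof (rule ccontr)
    assume "rho ` A \<inter> rho' ` A \<noteq> {}"
    then obtain x y where "x \<in> A" "y \<in> A" "rho x = rho' y" by blast
    then show False using rho_facts(1)[OF A[of x]] rho_facts(3)[OF A[of y]] by simp
  qed
  have "card (rho ` A \<union> rho' ` A) = card (rho ` A) + card (rho' ` A)"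
    using fin disj by (intro card_Un_disjoint) auto
  also have "\<dots> = 2 * card A" using card_image[OF i1] card_image[OF i2] by simp
  finally show ?thesis unfolding eq .
qed

lemma card_W4:
  assumes a: "a > 1" shows "card (Wset 4 a) = 1 + 2 * card (S a)"
proof -
  have finS: "finite (S a)"
    using R_roots_card(2)[of a] by (rule finite_subset[rotated]) (auto simp: S_def)
  have S2: "\<And>s. s \<in> S a \<Longrightarrow> s > 2" unfolding S_def by auto
  let ?T = "{w. w > 0 \<and> w + 1/w \<in> S a}"
  have finT: "finite ?T"
  proof -
    have "?T \<subseteq> rho ` S a \<union> rho' ` S a"
    proof
      fix w assume "w \<in> ?T"
      then have w: "w > 0" "w + 1/w \<in> S a" by auto
      then have "w = rho (w + 1/w) \<or> w = rho' (w + 1/w)" using rho_facts(6)[OF S2[OF w(2)] w(1)] by simp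
      then show "w \<in> rho ` S a \<union> rho' ` S a" using w(2) by blast
    qed
    then show ?thesis using finS by (meson finite_Un finite_imageI finite_subset)
  qed
  have n1: "1 \<notin> ?T" using S2 by fastforce
  have "card (Wset 4 a) = card (insert 1 ?T)" using Wset4[OF a] by simp
  also have "\<dots> = 1 + card ?T" using finT n1 by simp
  also have "card ?T = 2 * card (S a)" using card_T[OF finS S2] .
  finally show ?thesis .
qed


lemma theta_bounds: "\<bar>theta J \<beta>\<bar> < 1"
  unfolding theta_def using tanh_real_bounds[of "J*\<beta>"] by auto

lemma card_WP:
  assumes th: "\<bar>\<theta>\<bar> < 1"
  shows "card {h\<in>I3. wp_system k \<theta> h} = card {y. G k \<theta> y = 0}"
proof -
  have "inj (\<lambda>y. (-(real k * fI y \<theta>), y, -y, real k * fI y \<theta>))"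
    by (rule injI) simp
  then have "inj_on (\<lambda>y. (-(real k * fI y \<theta>), y, -y, real k * fI y \<theta>)) {y. G k \<theta> y = 0}"
    by (rule inj_on_subset) simp
  then show ?thesis unfolding WP_image[OF th] by (rule card_image)
qed

lemma Fm_1: "a > 1 \<Longrightarrow> Fm a 1 = 1" unfolding Fm_def by (simp add: add.commute)

theorem theorem3:
  shows "(\<forall>k::nat. \<forall>J \<beta>::real. 1 \<le> k \<and> k \<le> 3 \<and> \<beta> > 0 \<and> alpha J \<beta> > 1 \<longrightarrow>
            (\<forall>h \<in> WP_Gibbs_I3 k J \<beta>. translation_invariant h))
      \<and> (\<exists>\<alpha>cr::real. 6.37 < \<alpha>cr \<and> \<alpha>cr < 6.38 \<and>
            (\<forall>J \<beta>::real. \<beta> > 0 \<and> alpha J \<beta> > 1 \<longrightarrow>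
               (alpha J \<beta> < \<alpha>cr \<longrightarrow> card (WP_Gibbs_I3 4 J \<beta>) = 1) \<and>
               (alpha J \<beta> = \<alpha>cr \<longrightarrow> card (WP_Gibbs_I3 4 J \<beta>) = 3) \<and>
               (alpha J \<beta> > \<alpha>cr \<longrightarrow> card (WP_Gibbs_I3 4 J \<beta>) = 5)))"
proof (intro conjI allI impI ballI)
  fix k :: nat and J \<beta> :: real and h
  assume H: "1 \<le> k \<and> k \<le> 3 \<and> \<beta> > 0 \<and> alpha J \<beta> > 1"
  assume hW: "h \<in> WP_Gibbs_I3 k J \<beta>"
  define \<theta> where "\<theta> = theta J \<beta>"
  define a where "a = (1-\<theta>)/(1+\<theta>)"
  have th: "\<bar>\<theta>\<bar> < 1" unfolding \<theta>_def by (rule theta_bounds)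
  have a1: "(1-\<theta>)/(1+\<theta>) > 1" using H unfolding alpha_def \<theta>_def by simp
  have a1': "a > 1" using a1 unfolding a_def .
  have k1: "k \<ge> 1" and k3: "k \<in> {1,2,3}" using H by auto
  have "h \<in> {h\<in>I3. wp_system k \<theta> h}" using hW unfolding WP_Gibbs_I3_def \<theta>_def .
  then obtain y where y: "G k \<theta> y = 0" "h = (-(real k * fI y \<theta>), y, -y, real k * fI y \<theta>)"
    unfolding WP_image[OF th] by blast
  have "Fm a (exp (2*y)) \<in> Wset k a" using G_zero_iff[OF th k1 a1] y(1) unfolding a_def by simp
  then have e: "(a - Fm a (exp (2*y)))*(Fm a (exp (2*y)))^(k-1)*((Fm a (exp (2*y)))^k+a)
      = (a*Fm a (exp (2*y))-1)*(a*(Fm a (exp (2*y)))^k+1)" unfolding Wset_def by simp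
  have "1/a > 0" using a1' by simp
  moreover have "1/a < Fm a (exp (2*y))" using Fm_range(1)[OF a1', of "exp (2*y)"] by simp
  ultimately have w0: "Fm a (exp (2*y)) > 0" by linarith
  have "Fm a (exp (2*y)) = 1" using W_small[OF a1' w0 k3 e] .
  then have "Fm a (exp (2*y)) = Fm a 1" using Fm_1[OF a1'] by simp
  then have "exp (2*y) = 1" using Fm_inj[OF a1' exp_gt_zero zero_less_one] by blast
  then have "y = 0" by simp
  then show "translation_invariant h" unfolding y(2) translation_invariant_def by (simp add: fI_0)
next
  obtain c where c: "6.37 < c" "c < 6.38" "Dl c = 0" "\<And>a. 5/2 \<le> a \<and> a < c \<Longrightarrow> Dl a < 0"
      "\<And>a. c < a \<Longrightarrow> Dl a > 0"
    using acr_exists by blast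
  have main: "card (WP_Gibbs_I3 4 J \<beta>) = 1 + 2 * card (S (alpha J \<beta>))" if a: "alpha J \<beta> > 1" for J \<beta>
  proof -
    define \<theta> where "\<theta> = theta J \<beta>"
    have th: "\<bar>\<theta>\<bar> < 1" unfolding \<theta>_def by (rule theta_bounds)
    have ad: "alpha J \<beta> = (1-\<theta>)/(1+\<theta>)" unfolding alpha_def \<theta>_def ..
    have a1: "(1-\<theta>)/(1+\<theta>) > 1" using a ad by simp
    have "card (WP_Gibbs_I3 4 J \<beta>) = card {y. G 4 \<theta> y = 0}"
      unfolding WP_Gibbs_I3_def \<theta>_def[symmetric] by (rule card_WP[OF th])
    also have "\<dots> = card (Wset 4 (alpha J \<beta>))" unfolding ad by (rule card_G[OF th _ a1]) simp
    also have "\<dots> = 1 + 2 * card (S (alpha J \<beta>))" by (rule card_W4[OF a])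
    finally show ?thesis .
  qed
  show "\<exists>\<alpha>cr::real. 6.37 < \<alpha>cr \<and> \<alpha>cr < 6.38 \<and>
            (\<forall>J \<beta>::real. \<beta> > 0 \<and> alpha J \<beta> > 1 \<longrightarrow>
               (alpha J \<beta> < \<alpha>cr \<longrightarrow> card (WP_Gibbs_I3 4 J \<beta>) = 1) \<and>
               (alpha J \<beta> = \<alpha>cr \<longrightarrow> card (WP_Gibbs_I3 4 J \<beta>) = 3) \<and>
               (alpha J \<beta> > \<alpha>cr \<longrightarrow> card (WP_Gibbs_I3 4 J \<beta>) = 5))"
  proof (intro exI conjI allI impI)
    show "6.37 < c" "c < 6.38" by (fact c(1)) (fact c(2))
    fix J \<beta> :: real assume H: "\<beta> > 0 \<and> alpha J \<beta> > 1"
    define a where "a = alpha J \<beta>"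
    have a1: "a > 1" using H unfolding a_def by simp
    have M: "card (WP_Gibbs_I3 4 J \<beta>) = 1 + 2 * card (S a)" using main a1 unfolding a_def by simp
    {
      assume "alpha J \<beta> < c"
      then have ac: "a < c" unfolding a_def .
      have "a \<le> 638/100" using ac c(2) by simp
      moreover have "a \<le> 5/2 \<or> Dl a < 0" using c(4)[of a] ac by linarith
      ultimately have "card (S a) = 0" using S_cases(1)[OF a1] by blast
      then show "card (WP_Gibbs_I3 4 J \<beta>) = 1" using M by simp
    }
    {
      assume "alpha J \<beta> = c"
      then have ac: "a = c" unfolding a_def .
      have "card (S a) = 1" using S_cases(2)[OF a1] ac c(1,2,3) by simp
      then show "card (WP_Gibbs_I3 4 J \<beta>) = 3" using M by simp
    }
    {
      assume "alpha J \<beta> > c"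
      then have ac: "a > c" unfolding a_def .
      have "card (S a) = 2" using S_cases(3)[OF a1] ac c(1) c(5)[of a] by simp
      then show "card (WP_Gibbs_I3 4 J \<beta>) = 5" using M by simp
    }
  qed
qed


end
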